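(* Let $D>0$ be a square-free integer with $-D\equiv 2$ or $3\pmod 4$, and suppose $C(-4D)\cong(\mathbb{Z}/2\mathbb{Z})^n$ for some $n\ge 0$. Let $c=p_1^{n_1}\cdots p_k^{n_k}$ be an odd positive integer, with $p_i$ distinct primes. Then there exists a normalized solution $(a,b,c)$ to $x^2+Dy^2=z^2$ if and only if $\left(\frac{-D}{p_i}\right)=1$ for all $1\le i\le k$.
   Context: A normalized solution of $x^2+Dy^2=z^2$ is a triple $(a,b,c)$ of natural numbers with $a^2+Db^2=c^2$ and $\gcd(a,b,c)=1$. $C(-4D)$ denotes the set of $\mathrm{SL}_2(\mathbb{Z})$-equivalence classes of primitive positive-definite binary quadratic forms of discriminant $-4D$, a group under Dirichlet composition. $\left(\frac{\cdot}{p}\right)$ is the Legendre symbol. *)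

theory Defs
  imports "HOL-Algebra.Product_Groups" "HOL-Algebra.Elementary_Groups"
          "HOL-Number_Theory.Number_Theory" "HOL-Computational_Algebra.Squarefree"
begin

type_synonym bqf = "int \<times> int \<times> int"

definition bqf_eval :: "bqf \<Rightarrow> int \<Rightarrow> int \<Rightarrow> int" where
  "bqf_eval f x y = (case f of (a, b, c) \<Rightarrow> a * x^2 + b * x * y + c * y^2)"

definition bqf_disc :: "bqf \<Rightarrow> int" where
  "bqf_disc f = (case f of (a, b, c) \<Rightarrow> b^2 - 4 * a * c)"

definition bqf_primitive :: "bqf \<Rightarrow> bool" where
  "bqf_primitive f = (case f of (a, b, c) \<Rightarrow> gcd (gcd a b) c = 1)"

definition bqf_posdef :: "bqf \<Rightarrow> bool" where
  "bqf_posdef f = (\<forall>x y. (x, y) \<noteq> (0, 0) \<longrightarrow> bqf_eval f x y > 0)"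

definition ppd_forms :: "int \<Rightarrow> bqf set" where
  "ppd_forms Delta = {f. bqf_disc f = Delta \<and> bqf_primitive f \<and> bqf_posdef f}"

definition bqf_equiv :: "bqf \<Rightarrow> bqf \<Rightarrow> bool" where
  "bqf_equiv f g = (\<exists>p q r s. p * s - q * r = 1 \<and>
       (\<forall>x y. bqf_eval g x y = bqf_eval f (p * x + q * y) (r * x + s * y)))"

definition bqf_equiv_rel :: "int \<Rightarrow> (bqf \<times> bqf) set" where
  "bqf_equiv_rel Delta = {(f, g). f \<in> ppd_forms Delta \<and> g \<in> ppd_forms Delta \<and> bqf_equiv f g}"

definition form_classes :: "int \<Rightarrow> bqf set set" where
  "form_classes Delta = ppd_forms Delta // bqf_equiv_rel Delta"

definition dirichlet_composite :: "int \<Rightarrow> bqf \<Rightarrow> bqf \<Rightarrow> bqf \<Rightarrow> bool" where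
  "dirichlet_composite Delta f1 f2 h =
     (case f1 of (a1, b1, c1) \<Rightarrow> case f2 of (a2, b2, c2) \<Rightarrow>
        gcd (gcd a1 a2) ((b1 + b2) div 2) = 1 \<and>
        (\<exists>B. [B = b1] (mod 2 * a1) \<and> [B = b2] (mod 2 * a2) \<and> [B^2 = Delta] (mod 4 * a1 * a2) \<and>
             h = (a1 * a2, B, (B^2 - Delta) div (4 * a1 * a2))))"

definition principal_form :: "int \<Rightarrow> bqf" where
  "principal_form Delta = (if even Delta then (1, 0, - Delta div 4) else (1, 1, (1 - Delta) div 4))"

definition form_class_group :: "int \<Rightarrow> bqf set monoid" where
  "form_class_group Delta =
     \<lparr> carrier = form_classes Delta,
       monoid.mult = (\<lambda>X Y. THE Z. Z \<in> form_classes Delta \<and>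
          (\<exists>f1\<in>X. \<exists>f2\<in>Y. \<exists>h\<in>Z. dirichlet_composite Delta f1 f2 h)),
       one = bqf_equiv_rel Delta `` {principal_form Delta} \<rparr>"

definition elem_abelian_2 :: "nat \<Rightarrow> (nat \<Rightarrow> int) monoid" where
  "elem_abelian_2 n = product_group {..<n} (\<lambda>_. integer_mod_group 2)"

end

theory Submission
  imports Defs
begin


definition zmul :: "int \<Rightarrow> int \<times> int \<Rightarrow> int \<times> int \<Rightarrow> int \<times> int" where
  "zmul D z1 z2 = (fst z1 * fst z2 - D * snd z1 * snd z2, fst z1 * snd z2 + snd z1 * fst z2)"

definition znorm :: "int \<Rightarrow> int \<times> int \<Rightarrow> int" where
  "znorm D z = (fst z)^2 + D * (snd z)^2"

definition zdet :: "int \<times> int \<Rightarrow> int \<times> int \<Rightarrow> int" where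
  "zdet z1 z2 = fst z1 * snd z2 - snd z1 * fst z2"

definition lat :: "int \<Rightarrow> int \<Rightarrow> (int \<times> int) set" where
  "lat A b0 = {z. A dvd fst z - b0 * snd z}"

inductive_set zspan :: "(int \<times> int) set \<Rightarrow> (int \<times> int) set" for S where
  zs0: "(0,0) \<in> zspan S"
| zsgen: "z \<in> S \<Longrightarrow> z \<in> zspan S"
| zsadd: "z \<in> zspan S \<Longrightarrow> w \<in> zspan S \<Longrightarrow> (fst z + fst w, snd z + snd w) \<in> zspan S"
| zsneg: "z \<in> zspan S \<Longrightarrow> (- fst z, - snd z) \<in> zspan S"

definition prods :: "int \<Rightarrow> (int \<times> int) set \<Rightarrow> (int \<times> int) set \<Rightarrow> (int \<times> int) set" where
  "prods D S T = {zmul D s t | s t. s \<in> S \<and> t \<in> T}"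

lemma zmul_add: "zmul D a (fst z + fst w, snd z + snd w) = (fst (zmul D a z) + fst (zmul D a w), snd (zmul D a z) + snd (zmul D a w))"
  by (simp add: zmul_def algebra_simps)

lemma zmul_neg: "zmul D a (- fst z, - snd z) = (- fst (zmul D a z), - snd (zmul D a z))"
  by (simp add: zmul_def algebra_simps)

lemma zmul_zero: "zmul D a (0,0) = (0,0)"
  by (simp add: zmul_def)

lemma zspan_scale: "zspan (zmul D a ` S) = zmul D a ` zspan S"
proof
  show "zspan (zmul D a ` S) \<subseteq> zmul D a ` zspan S"
  proof
    fix x assume "x \<in> zspan (zmul D a ` S)"
    then show "x \<in> zmul D a ` zspan S"
    proof induction
      case zs0 then show ?case by (metis image_eqI zmul_zero zspan.zs0)
    next
      case (zsgen z) then show ?case by (auto intro: zspan.zsgen)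
    next
      case (zsadd z w)
      then obtain z' w' where "z' \<in> zspan S" "w' \<in> zspan S" "z = zmul D a z'" "w = zmul D a w'" by auto
      then show ?case using zmul_add[of D a z' w']
        by (intro image_eqI[where x="(fst z' + fst w', snd z' + snd w')"]) (auto intro!: zspan.zsadd)
    next
      case (zsneg z)
      then obtain z' where "z' \<in> zspan S" "z = zmul D a z'" by auto
      then show ?case using zmul_neg[of D a z']
        by (intro image_eqI[where x="(- fst z', - snd z')"]) (auto intro!: zspan.zsneg)
    qed
  qed
next
  show "zmul D a ` zspan S \<subseteq> zspan (zmul D a ` S)"
  proof
    fix x assume "x \<in> zmul D a ` zspan S"
    then obtain y where y: "y \<in> zspan S" "x = zmul D a y" by auto
    from y(1) have "zmul D a y \<in> zspan (zmul D a ` S)"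
    proof induction
      case zs0 then show ?case by (simp add: zmul_zero zspan.zs0)
    next
      case (zsgen z) then show ?case by (auto intro: zspan.zsgen)
    next
      case (zsadd z w) then show ?case by (simp only: zmul_add) (rule zspan.zsadd)
    next
      case (zsneg z) then show ?case by (simp only: zmul_neg) (rule zspan.zsneg)
    qed
    then show "x \<in> zspan (zmul D a ` S)" using y by simp
  qed
qed

lemma zmul_assoc_comm: "zmul D (zmul D a s) (zmul D b t) = zmul D (zmul D a b) (zmul D s t)"
  by (simp add: zmul_def algebra_simps)

lemma prods_scale: "prods D (zmul D a ` S) (zmul D b ` T) = zmul D (zmul D a b) ` prods D S T"
proof
  show "prods D (zmul D a ` S) (zmul D b ` T) \<subseteq> zmul D (zmul D a b) ` prods D S T"
  proof
    fix x assume "x \<in> prods D (zmul D a ` S) (zmul D b ` T)"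
    then obtain s t where st: "s \<in> S" "t \<in> T" "x = zmul D (zmul D a s) (zmul D b t)"
      unfolding prods_def by auto
    then have "x = zmul D (zmul D a b) (zmul D s t)" by (simp add: zmul_assoc_comm)
    then show "x \<in> zmul D (zmul D a b) ` prods D S T" using st unfolding prods_def by blast
  qed
  show "zmul D (zmul D a b) ` prods D S T \<subseteq> prods D (zmul D a ` S) (zmul D b ` T)"
  proof
    fix x assume "x \<in> zmul D (zmul D a b) ` prods D S T"
    then obtain s t where st: "s \<in> S" "t \<in> T" "x = zmul D (zmul D a b) (zmul D s t)"
      unfolding prods_def by auto
    then have "x = zmul D (zmul D a s) (zmul D b t)" by (simp add: zmul_assoc_comm)
    then show "x \<in> prods D (zmul D a ` S) (zmul D b ` T)" using st unfolding prods_def by blast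
  qed
qed

lemma znorm_mult: "znorm D (zmul D a b) = znorm D a * znorm D b"
  by (simp add: znorm_def zmul_def power2_eq_square algebra_simps)

lemma zdet_mult: "zdet (zmul D a z1) (zmul D a z2) = znorm D a * zdet z1 z2"
  by (simp add: znorm_def zdet_def zmul_def power2_eq_square algebra_simps)

lemma znorm_pos: "D > 0 \<Longrightarrow> z \<noteq> (0,0) \<Longrightarrow> znorm D z > 0"
proof -
  assume D: "D > 0" and z: "z \<noteq> (0,0)"
  obtain u v where uv: "z = (u,v)" by (cases z)
  show ?thesis
  proof (cases "v = 0")
    case True
    then have "u \<noteq> 0" using z uv by auto
    then show ?thesis using True uv by (simp add: znorm_def)
  next
    case False
    then have "D * v^2 > 0" using D by simp
    moreover have "u^2 \<ge> 0" by simp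
    ultimately have "u^2 + D * v^2 > 0" by (metis add_nonneg_pos)
    then show ?thesis using uv by (simp add: znorm_def)
  qed
qed

lemma lat_closed_zspan: "zspan (lat A b0) \<subseteq> lat A b0"
proof
  fix x assume "x \<in> zspan (lat A b0)" then show "x \<in> lat A b0"
  proof induction
    case (zsadd z w)
    have "(fst z + fst w) - b0 * (snd z + snd w) = (fst z - b0 * snd z) + (fst w - b0 * snd w)"
      by (simp add: algebra_simps)
    moreover have "A dvd (fst z - b0 * snd z) + (fst w - b0 * snd w)"
      using zsadd.IH unfolding lat_def by (simp add: dvd_add)
    ultimately show ?case unfolding lat_def mem_Collect_eq prod.sel by metis
  next
    case (zsneg z)
    have "(- fst z) - b0 * (- snd z) = - (fst z - b0 * snd z)" by (simp add: algebra_simps)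
    then show ?case using zsneg.IH unfolding lat_def by (simp add: dvd_diff_commute)
  qed (auto simp: lat_def)
qed



lemma zspan_smul_nat: "z \<in> zspan S \<Longrightarrow> (int n * fst z, int n * snd z) \<in> zspan S"
proof (induction n)
  case 0 then show ?case by (simp add: zspan.zs0)
next
  case (Suc n)
  then have "(fst (int n * fst z, int n * snd z) + fst z, snd (int n * fst z, int n * snd z) + snd z) \<in> zspan S"
    by (intro zspan.zsadd) auto
  then show ?case by (simp add: algebra_simps)
qed

lemma zspan_smul: "z \<in> zspan S \<Longrightarrow> (k * fst z, k * snd z) \<in> zspan S"
proof (cases "k \<ge> 0")
  case True
  assume z: "z \<in> zspan S"
  obtain n where "k = int n" using True nonneg_eq_int by blast
  then show ?thesis using zspan_smul_nat[OF z] by simp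
next
  case False
  assume z: "z \<in> zspan S"
  obtain n where n: "-k = int n" using False by (metis neg_0_le_iff_le nonneg_eq_int le_less linorder_not_le)
  have "(- fst (int n * fst z, int n * snd z), - snd (int n * fst z, int n * snd z)) \<in> zspan S"
    by (rule zspan.zsneg[OF zspan_smul_nat[OF z]])
  then show ?thesis using n by (simp add: algebra_simps) (metis minus_minus mult_minus_left)
qed

lemma zspan_lin: "z \<in> zspan S \<Longrightarrow> w \<in> zspan S \<Longrightarrow> (x * fst z + y * fst w, x * snd z + y * snd w) \<in> zspan S"
  using zspan.zsadd[OF zspan_smul[of z S x] zspan_smul[of w S y]] by simp

lemma zspan_mono: "S \<subseteq> T \<Longrightarrow> zspan S \<subseteq> zspan T"
proof
  fix x assume ST: "S \<subseteq> T" and "x \<in> zspan S"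
  from this(2) show "x \<in> zspan T"
    by (induction rule: zspan.induct) (use ST in \<open>auto intro: zspan.intros\<close>)
qed

lemma lat_param: "z \<in> lat A b0 \<longleftrightarrow> (\<exists>X Y. z = (A * X + b0 * Y, Y))"
proof
  assume "z \<in> lat A b0"
  then obtain X where "fst z - b0 * snd z = A * X" unfolding lat_def by auto
  then have "z = (A * X + b0 * snd z, snd z)" by (cases z) auto
  then show "\<exists>X Y. z = (A * X + b0 * Y, Y)" by blast
qed (auto simp: lat_def)

lemma lat_shift: "lat A (b0 + A * k) = lat A b0"
proof -
  have "\<And>u v. A dvd u - (b0 + A * k) * v \<longleftrightarrow> A dvd u - b0 * v"
  proof -
    fix u v
    have "u - (b0 + A * k) * v = (u - b0 * v) + A * (- k * v)" by (simp add: algebra_simps)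
    then show "A dvd u - (b0 + A * k) * v \<longleftrightarrow> A dvd u - b0 * v"
      by (metis dvd_add_left_iff dvd_triv_left add.commute)
  qed
  then show ?thesis unfolding lat_def by auto
qed

definition Lf :: "bqf \<Rightarrow> (int \<times> int) set" where
  "Lf f = (case f of (a, b, c) \<Rightarrow> lat a (b div 2))"

lemma ppd_facts:
  assumes "(a, b, c) \<in> ppd_forms (-4 * D)"
  shows "a > 0" "b = 2 * (b div 2)" "(b div 2)^2 + D = a * c"
proof -
  have disc: "b^2 - 4 * a * c = -4 * D" and pd: "bqf_posdef (a,b,c)"
    using assms by (auto simp: ppd_forms_def bqf_disc_def)
  have "bqf_eval (a,b,c) 1 0 > 0" using pd unfolding bqf_posdef_def by auto
  then show "a > 0" by (simp add: bqf_eval_def)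
  have "even (b^2)" using disc by (metis dvd_add_left_iff dvd_triv_left mult.assoc diff_add_cancel
      even_minus minus_mult_left even_mult_iff even_numeral)
  then have ev: "even b" by simp
  then show "b = 2 * (b div 2)" by simp
  have "(2 * (b div 2))^2 - 4 * a * c = -4 * D" using disc ev by simp
  then show "(b div 2)^2 + D = a * c" by (simp add: power2_eq_square algebra_simps)
qed

lemma norm_lat:
  assumes "b = 2 * b0" "b0^2 + D = a * c"
  shows "znorm D (a * X + b0 * Y, Y) = a * bqf_eval (a, b, c) X Y"
proof -
  have Deq: "D = a * c - b0^2" using assms(2) by simp
  show ?thesis unfolding Deq assms(1) by (simp add: znorm_def bqf_eval_def power2_eq_square algebra_simps)
qed

lemma zmul_lin: "zmul D al (u1 * x + u2 * y, v1 * x + v2 * y) =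
   (x * fst (zmul D al (u1, v1)) + y * fst (zmul D al (u2, v2)), x * snd (zmul D al (u1, v1)) + y * snd (zmul D al (u2, v2)))"
  by (simp add: zmul_def algebra_simps)



lemma equiv_from_lat:
  assumes D: "D > 0" and f: "(a,b,c) \<in> ppd_forms (-4*D)" and g: "(a',b',c') \<in> ppd_forms (-4*D)"
    and al: "al \<noteq> (0,0)" and be: "be \<noteq> (0,0)"
    and eq: "zmul D al ` lat a' (b' div 2) = zmul D be ` lat a (b div 2)"
  shows "bqf_equiv (a,b,c) (a',b',c')"
proof -
  define b0 where "b0 = b div 2"
  define b1 where "b1 = b' div 2"
  have fa: "a > 0" "b = 2 * b0" "b0^2 + D = a * c" using ppd_facts[OF f] b0_def by auto
  have ga: "a' > 0" "b' = 2 * b1" "b1^2 + D = a' * c'" using ppd_facts[OF g] b1_def by auto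
  have Na: "znorm D al > 0" and Nb: "znorm D be > 0" using znorm_pos D al be by auto
  have "(a', 0) \<in> lat a' b1" by (simp add: lat_def)
  then have "zmul D al (a',0) \<in> zmul D be ` lat a b0" using eq b0_def b1_def by auto
  then obtain p r where pr: "zmul D al (a',0) = zmul D be (a * p + b0 * r, r)"
    by (auto simp: lat_param)
  have "(b1, 1) \<in> lat a' b1" by (simp add: lat_def)
  then have "zmul D al (b1,1) \<in> zmul D be ` lat a b0" using eq b0_def b1_def by auto
  then obtain q s where qs: "zmul D al (b1,1) = zmul D be (a * q + b0 * s, s)"
    by (auto simp: lat_param)
  have "(a, 0) \<in> lat a b0" by (simp add: lat_def)
  then have "zmul D be (a,0) \<in> zmul D al ` lat a' b1" using eq b0_def b1_def by auto
  then obtain p' r' where pr': "zmul D be (a,0) = zmul D al (a' * p' + b1 * r', r')"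
    by (auto simp: lat_param)
  have "(b0, 1) \<in> lat a b0" by (simp add: lat_def)
  then have "zmul D be (b0,1) \<in> zmul D al ` lat a' b1" using eq b0_def b1_def by auto
  then obtain q' s' where qs': "zmul D be (b0,1) = zmul D al (a' * q' + b1 * s', s')"
    by (auto simp: lat_param)
  define d where "d = p * s - q * r"
  define d' where "d' = p' * s' - q' * r'"
  have det1: "znorm D al * a' = znorm D be * (a * d)"
  proof -
    have "zdet (zmul D al (a',0)) (zmul D al (b1,1)) = znorm D al * a'"
      by (simp only: zdet_mult) (simp add: zdet_def)
    moreover have "zdet (zmul D be (a * p + b0 * r, r)) (zmul D be (a * q + b0 * s, s)) = znorm D be * (a * d)"
      by (simp only: zdet_mult) (simp add: zdet_def d_def algebra_simps)
    ultimately show ?thesis using pr qs by simp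
  qed
  have det2: "znorm D be * a = znorm D al * (a' * d')"
  proof -
    have "zdet (zmul D be (a,0)) (zmul D be (b0,1)) = znorm D be * a"
      by (simp only: zdet_mult) (simp add: zdet_def)
    moreover have "zdet (zmul D al (a' * p' + b1 * r', r')) (zmul D al (a' * q' + b1 * s', s')) = znorm D al * (a' * d')"
      by (simp only: zdet_mult) (simp add: zdet_def d'_def algebra_simps)
    ultimately show ?thesis using pr' qs' by simp
  qed
  have pos1: "znorm D al * a' > 0" using Na ga by simp
  have pos2: "znorm D be * a > 0" using Nb fa by simp
  have "znorm D al * a' = (znorm D be * a) * d"
    using det1 by (simp add: algebra_simps)
  also have "\<dots> = (znorm D al * a') * (d * d')"
    using det2 by (simp add: algebra_simps)
  finally have "znorm D al * a' = (znorm D al * a') * (d * d')" .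
  then have dd: "d * d' = 1" using Na ga(1) by simp
  have "znorm D be * a * d > 0" using det1 pos1 by (simp add: algebra_simps)
  then have "d > 0" using pos2 by (simp add: zero_less_mult_iff)
  then have d1: "d = 1" using dd pos_zmult_eq_1_iff by blast
  have normeq: "znorm D al * a' = znorm D be * a" using det1 d1 by simp
  have "\<forall>x y. bqf_eval (a',b',c') x y = bqf_eval (a,b,c) (p * x + q * y) (r * x + s * y)"
  proof (intro allI)
    fix x y
    have "zmul D al (a' * x + b1 * y, 0 * x + 1 * y) = zmul D be ((a * p + b0 * r) * x + (a * q + b0 * s) * y, r * x + s * y)"
      by (simp only: zmul_lin pr qs)
    then have "zmul D al (a' * x + b1 * y, y) = zmul D be (a * (p * x + q * y) + b0 * (r * x + s * y), r * x + s * y)"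
      by (simp add: algebra_simps)
    then have "znorm D al * znorm D (a' * x + b1 * y, y) = znorm D be * znorm D (a * (p * x + q * y) + b0 * (r * x + s * y), r * x + s * y)"
      by (metis znorm_mult)
    then have "znorm D al * (a' * bqf_eval (a',b',c') x y) = znorm D be * (a * bqf_eval (a,b,c) (p * x + q * y) (r * x + s * y))"
      using norm_lat[OF fa(2,3)] norm_lat[OF ga(2,3)] by simp
    then have "(znorm D al * a') * bqf_eval (a',b',c') x y = (znorm D be * a) * bqf_eval (a,b,c) (p * x + q * y) (r * x + s * y)"
      by (simp add: algebra_simps)
    then show "bqf_eval (a',b',c') x y = bqf_eval (a,b,c) (p * x + q * y) (r * x + s * y)"
      using normeq Nb fa(1) by simp
  qed
  then show ?thesis unfolding bqf_equiv_def using d1 d_def by (metis mult.commute)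
qed



lemma lat_from_equiv:
  assumes D: "D > 0" and f: "(a,b,c) \<in> ppd_forms (-4*D)" and g: "(a',b',c') \<in> ppd_forms (-4*D)"
    and eqv: "bqf_equiv (a,b,c) (a',b',c')"
  shows "\<exists>al be. al \<noteq> (0,0) \<and> be \<noteq> (0,0) \<and> zmul D al ` lat a' (b' div 2) = zmul D be ` lat a (b div 2)"
proof -
  define b0 where "b0 = b div 2"
  define b1 where "b1 = b' div 2"
  have fa: "a > 0" "b = 2 * b0" "b0^2 + D = a * c" using ppd_facts[OF f] b0_def by auto
  have ga: "a' > 0" "b' = 2 * b1" "b1^2 + D = a' * c'" using ppd_facts[OF g] b1_def by auto
  obtain p q r s where det: "p * s - q * r = 1" and
    ev: "\<And>x y. bqf_eval (a',b',c') x y = bqf_eval (a,b,c) (p * x + q * y) (r * x + s * y)"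
    using eqv unfolding bqf_equiv_def by blast
  have a'eq: "a' = a * p^2 + b * p * r + c * r^2" using ev[of 1 0] by (simp add: bqf_eval_def)
  have c'eq: "c' = a * q^2 + b * q * s + c * s^2" using ev[of 0 1] by (simp add: bqf_eval_def)
  have "a' + b' + c' = a * (p+q)^2 + b * (p+q) * (r+s) + c * (r+s)^2" using ev[of 1 1] by (simp add: bqf_eval_def)
  then have "b' = 2 * a * p * q + b * (p * s + q * r) + 2 * c * r * s"
    using a'eq c'eq by (simp add: power2_eq_square algebra_simps)
  then have b1eq: "b1 = a * p * q + b0 * (p * s + q * r) + c * r * s" using ga(2) fa(2) by simp
  have a'eq2: "a' = a * p^2 + 2 * b0 * p * r + c * r^2" using a'eq fa(2) by simp
  have Deq: "D = a * c - b0^2" using fa(3) by simp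
  define al where "al = (a * p + b0 * r, r)"
  define be where "be = (a', 0::int)"
  have k1: "zmul D al (a', 0) = zmul D be (a * p + b0 * r, r)"
    by (simp add: zmul_def al_def be_def algebra_simps)
  have k2: "zmul D al (b1, 1) = zmul D be (a * q + b0 * s, s)"
  proof -
    have e1: "(a * p + b0 * r) * b1 - D * r - a' * (a * q + b0 * s) = D * r * (p * s - q * r - 1)"
      unfolding b1eq a'eq2 Deq by (simp add: power2_eq_square algebra_simps)
    have e2: "(a * p + b0 * r) + r * b1 - a' * s = - (a * p + b0 * r) * (p * s - q * r - 1)"
      unfolding b1eq a'eq2 by (simp add: power2_eq_square algebra_simps)
    have "(a * p + b0 * r) * b1 - D * r = a' * (a * q + b0 * s)" using e1 det by simp
    moreover have "(a * p + b0 * r) + r * b1 = a' * s" using e2 det by simp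
    ultimately show ?thesis by (simp add: zmul_def al_def be_def algebra_simps)
  qed
  have "znorm D al = a * bqf_eval (a,b,c) p r" unfolding al_def by (rule norm_lat[OF fa(2,3)])
  also have "\<dots> = a * a'" using ev[of 1 0] by (simp add: bqf_eval_def)
  finally have "znorm D al > 0" using fa ga by simp
  then have alnz: "al \<noteq> (0,0)" by (auto simp: znorm_def)
  have benz: "be \<noteq> (0,0)" using ga by (simp add: be_def)
  have lin: "zmul D al (a' * x + b1 * y, y) = zmul D be (a * (p * x + q * y) + b0 * (r * x + s * y), r * x + s * y)" for x y
  proof -
    have "zmul D al (a' * x + b1 * y, 0 * x + 1 * y) = zmul D be ((a * p + b0 * r) * x + (a * q + b0 * s) * y, r * x + s * y)"
      by (simp only: zmul_lin k1 k2)
    then show ?thesis by (simp add: algebra_simps)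
  qed
  have "zmul D al ` lat a' b1 = zmul D be ` lat a b0"
  proof
    show "zmul D al ` lat a' b1 \<subseteq> zmul D be ` lat a b0"
    proof
      fix z assume "z \<in> zmul D al ` lat a' b1"
      then obtain x y where "z = zmul D al (a' * x + b1 * y, y)" by (auto simp: lat_param)
      then have "z = zmul D be (a * (p * x + q * y) + b0 * (r * x + s * y), r * x + s * y)" using lin by simp
      moreover have "(a * (p * x + q * y) + b0 * (r * x + s * y), r * x + s * y) \<in> lat a b0"
        by (auto simp: lat_param)
      ultimately show "z \<in> zmul D be ` lat a b0" by blast
    qed
    show "zmul D be ` lat a b0 \<subseteq> zmul D al ` lat a' b1"
    proof
      fix z assume "z \<in> zmul D be ` lat a b0"
      then obtain u v where uv: "z = zmul D be (a * u + b0 * v, v)" by (auto simp: lat_param)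
      define x where "x = s * u - q * v"
      define y where "y = p * v - r * u"
      have "p * x + q * y = u * (p * s - q * r)" "r * x + s * y = v * (p * s - q * r)"
        unfolding x_def y_def by (simp_all add: algebra_simps)
      then have "p * x + q * y = u" "r * x + s * y = v" using det by simp_all
      then have "z = zmul D al (a' * x + b1 * y, y)" using lin[of x y] uv by simp
      moreover have "(a' * x + b1 * y, y) \<in> lat a' b1" by (auto simp: lat_param)
      ultimately show "z \<in> zmul D al ` lat a' b1" by blast
    qed
  qed
  then show ?thesis using alnz benz b0_def b1_def by blast
qed



lemma lat_composite:
  assumes D: "D > 0" and f1: "(a1,b1,c1) \<in> ppd_forms (-4*D)" and f2: "(a2,b2,c2) \<in> ppd_forms (-4*D)"
    and comp: "dirichlet_composite (-4*D) (a1,b1,c1) (a2,b2,c2) h"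
  shows "Lf h = zspan (prods D (lat a1 (b1 div 2)) (lat a2 (b2 div 2)))"
proof -
  have g1: "gcd (gcd a1 a2) ((b1 + b2) div 2) = 1" using comp by (simp add: dirichlet_composite_def)
  obtain B where c1: "[B = b1] (mod 2 * a1)" and c2: "[B = b2] (mod 2 * a2)"
    and c3: "[B^2 = -4*D] (mod 4 * a1 * a2)"
    and h: "h = (a1 * a2, B, (B^2 - (-4*D)) div (4 * a1 * a2))"
    using comp by (auto simp: dirichlet_composite_def)
  have fa1: "a1 > 0" "b1 = 2 * (b1 div 2)" using ppd_facts[OF f1] by auto
  have fa2: "a2 > 0" "b2 = 2 * (b2 div 2)" using ppd_facts[OF f2] by auto
  have d3: "4 * a1 * a2 dvd B^2 + 4 * D" using c3 by (simp add: cong_iff_dvd_diff)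
  then have "4 dvd B^2 + 4 * D" by (metis dvd_mult_left mult.assoc)
  then have "4 dvd B^2" by (metis dvd_add_left_iff dvd_triv_left)
  then have "even (B^2)" by (metis dvd_trans even_numeral dvd_refl) 
  then have "even B" by simp
  then obtain B0 where B0: "B = 2 * B0" by blast
  have "4 * a1 * a2 dvd 4 * (B0^2 + D)" using d3 B0 by (simp add: power2_eq_square algebra_simps)
  then have "a1 * a2 dvd B0^2 + D" by (metis mult.assoc dvd_mult_cancel_left zero_neq_numeral)
  then obtain C where C: "B0^2 + D = a1 * a2 * C" by blast
  obtain k1 where k1: "b1 = B + 2 * a1 * k1" using c1 by (auto simp: cong_iff_lin)
  obtain k2 where k2: "b2 = B + 2 * a2 * k2" using c2 by (auto simp: cong_iff_lin)
  have "b1 div 2 = B0 + a1 * k1" using k1 B0 by simp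
  then have L1: "lat a1 (b1 div 2) = lat a1 B0" by (simp add: lat_shift)
  have "b2 div 2 = B0 + a2 * k2" using k2 B0 by simp
  then have L2: "lat a2 (b2 div 2) = lat a2 B0" by (simp add: lat_shift)
  have Lh: "Lf h = lat (a1 * a2) B0" using h B0 by (simp add: Lf_def)
  have m: "(b1 + b2) div 2 = 2 * B0 + a1 * k1 + a2 * k2" using k1 k2 B0 by simp
  obtain x y where xy: "x * gcd a1 a2 + y * ((b1 + b2) div 2) = 1" using bezout_int[of "gcd a1 a2" "(b1 + b2) div 2"] g1 by auto
  obtain x' y' where xy': "x' * a1 + y' * a2 = gcd a1 a2" using bezout_int[of a1 a2] by auto
  define u where "u = x * x' + y * k1"
  define v where "v = x * y' + y * k2"
  define t where "t = y"
  have bez: "u * a1 + v * a2 + t * (2 * B0) = 1"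
    using xy unfolding xy'[symmetric] m u_def v_def t_def by (simp add: algebra_simps)
  have "lat (a1 * a2) B0 = zspan (prods D (lat a1 B0) (lat a2 B0))"
  proof
    have "prods D (lat a1 B0) (lat a2 B0) \<subseteq> lat (a1 * a2) B0"
    proof
      fix z assume "z \<in> prods D (lat a1 B0) (lat a2 B0)"
      then obtain X Y X' Y' where z: "z = zmul D (a1 * X + B0 * Y, Y) (a2 * X' + B0 * Y', Y')"
        unfolding prods_def by (auto simp: lat_param)
      have "fst z - B0 * snd z = a1 * a2 * (X * X') - (B0^2 + D) * (Y * Y')"
        unfolding z by (simp add: zmul_def power2_eq_square algebra_simps)
      also have "\<dots> = (a1 * a2) * (X * X' - C * Y * Y')" unfolding C by (simp add: algebra_simps)
      finally show "z \<in> lat (a1 * a2) B0" unfolding lat_def by simp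
    qed
    then show "zspan (prods D (lat a1 B0) (lat a2 B0)) \<subseteq> lat (a1 * a2) B0"
      using zspan_mono lat_closed_zspan by blast
  next
    let ?S = "prods D (lat a1 B0) (lat a2 B0)"
    have in1: "(a1, 0) \<in> lat a1 B0" "(B0, 1) \<in> lat a1 B0" "(a2, 0) \<in> lat a2 B0" "(B0, 1) \<in> lat a2 B0"
      by (auto simp: lat_def)
    have p1: "zmul D (a1, 0) (a2, 0) \<in> zspan ?S" using in1 unfolding prods_def by (blast intro: zspan.zsgen)
    have p2: "zmul D (a1, 0) (B0, 1) \<in> zspan ?S" using in1 unfolding prods_def by (blast intro: zspan.zsgen)
    have p3: "zmul D (B0, 1) (a2, 0) \<in> zspan ?S" using in1 unfolding prods_def by (blast intro: zspan.zsgen)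
    have p4: "zmul D (B0, 1) (B0, 1) \<in> zspan ?S" using in1 unfolding prods_def by (blast intro: zspan.zsgen)
    have e1: "(a1 * a2, 0) \<in> zspan ?S" using p1 by (simp add: zmul_def)
    have q1: "(u * (a1 * B0) + v * (a2 * B0), u * a1 + v * a2) \<in> zspan ?S"
      using zspan_lin[OF p2 p3, of u v] by (simp add: zmul_def algebra_simps)
    have q2: "(t * (B0 * B0 - D) + (t * C) * (a1 * a2), t * (2 * B0) + (t * C) * 0) \<in> zspan ?S"
      using zspan_lin[OF p4 e1, of t "t * C"] by (simp add: zmul_def algebra_simps)
    have q3: "(1 * (u * (a1 * B0) + v * (a2 * B0)) + 1 * (t * (B0 * B0 - D) + (t * C) * (a1 * a2)),
               1 * (u * a1 + v * a2) + 1 * (t * (2 * B0) + (t * C) * 0)) \<in> zspan ?S"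
      using zspan_lin[OF q1 q2, of 1 1] by simp
    have "u * (a1 * B0) + v * (a2 * B0) + (t * (B0 * B0 - D) + (t * C) * (a1 * a2))
          = B0 * (u * a1 + v * a2 + t * (2 * B0)) + t * (a1 * a2 * C - (B0^2 + D))"
      by (simp add: power2_eq_square algebra_simps)
    also have "\<dots> = B0" using bez C by simp
    finally have e2: "(B0, 1) \<in> zspan ?S" using q3 bez by simp
    show "lat (a1 * a2) B0 \<subseteq> zspan ?S"
    proof
      fix z assume "z \<in> lat (a1 * a2) B0"
      then obtain X Y where z: "z = (a1 * a2 * X + B0 * Y, Y)" by (auto simp: lat_param)
      show "z \<in> zspan ?S" using zspan_lin[OF e1 e2, of X Y] z by (simp add: algebra_simps)
    qed
  qed
  then show ?thesis using Lh L1 L2 by simp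
qed



lemma composite_welldef:
  assumes D: "D > 0"
    and f1: "f1 \<in> ppd_forms (-4*D)" and f1': "f1' \<in> ppd_forms (-4*D)"
    and f2: "f2 \<in> ppd_forms (-4*D)" and f2': "f2' \<in> ppd_forms (-4*D)"
    and h: "h \<in> ppd_forms (-4*D)" and h': "h' \<in> ppd_forms (-4*D)"
    and e1: "bqf_equiv f1 f1'" and e2: "bqf_equiv f2 f2'"
    and c: "dirichlet_composite (-4*D) f1 f2 h" and c': "dirichlet_composite (-4*D) f1' f2' h'"
  shows "bqf_equiv h h'"
proof -
  obtain a1 b1 c1 where F1: "f1 = (a1,b1,c1)" by (cases f1) auto
  obtain a2 b2 c2 where F2: "f2 = (a2,b2,c2)" by (cases f2) auto
  obtain a1' b1' c1' where F1': "f1' = (a1',b1',c1')" by (cases f1') auto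
  obtain a2' b2' c2' where F2': "f2' = (a2',b2',c2')" by (cases f2') auto
  obtain ah bh ch where H: "h = (ah,bh,ch)" by (cases h) auto
  obtain ah' bh' ch' where H': "h' = (ah',bh',ch')" by (cases h') auto
  obtain al1 be1 where ab1: "al1 \<noteq> (0,0)" "be1 \<noteq> (0,0)"
    "zmul D al1 ` lat a1' (b1' div 2) = zmul D be1 ` lat a1 (b1 div 2)"
    using lat_from_equiv[OF D f1[unfolded F1] f1'[unfolded F1'] e1[unfolded F1 F1']] by blast
  obtain al2 be2 where ab2: "al2 \<noteq> (0,0)" "be2 \<noteq> (0,0)"
    "zmul D al2 ` lat a2' (b2' div 2) = zmul D be2 ` lat a2 (b2 div 2)"
    using lat_from_equiv[OF D f2[unfolded F2] f2'[unfolded F2'] e2[unfolded F2 F2']] by blast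
  have Lh: "Lf h = zspan (prods D (lat a1 (b1 div 2)) (lat a2 (b2 div 2)))"
    using lat_composite[OF D f1[unfolded F1] f2[unfolded F2] c[unfolded F1 F2]] .
  have Lh': "Lf h' = zspan (prods D (lat a1' (b1' div 2)) (lat a2' (b2' div 2)))"
    using lat_composite[OF D f1'[unfolded F1'] f2'[unfolded F2'] c'[unfolded F1' F2']] .
  have "zmul D (zmul D al1 al2) ` Lf h' = zspan (prods D (zmul D al1 ` lat a1' (b1' div 2)) (zmul D al2 ` lat a2' (b2' div 2)))"
    unfolding Lh' prods_scale zspan_scale ..
  also have "\<dots> = zspan (prods D (zmul D be1 ` lat a1 (b1 div 2)) (zmul D be2 ` lat a2 (b2 div 2)))"
    using ab1 ab2 by simp
  also have "\<dots> = zmul D (zmul D be1 be2) ` Lf h"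
    unfolding Lh prods_scale zspan_scale ..
  finally have eq: "zmul D (zmul D al1 al2) ` lat ah' (bh' div 2) = zmul D (zmul D be1 be2) ` lat ah (bh div 2)"
    using H H' by (simp add: Lf_def)
  have nz: "z \<noteq> (0,0) \<Longrightarrow> w \<noteq> (0,0) \<Longrightarrow> zmul D z w \<noteq> (0,0)" for z w
  proof -
    assume "z \<noteq> (0,0)" "w \<noteq> (0,0)"
    then have "znorm D (zmul D z w) > 0" using znorm_pos[OF D] znorm_mult by (metis mult_pos_pos)
    then show ?thesis by (auto simp: znorm_def)
  qed
  show ?thesis unfolding H H'
    by (rule equiv_from_lat[OF D h[unfolded H] h'[unfolded H'] nz[OF ab1(1) ab2(1)] nz[OF ab1(2) ab2(2)] eq])
qed

lemma bqf_equiv_refl: "bqf_equiv f f"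
  unfolding bqf_equiv_def by (rule exI[of _ 1], rule exI[of _ 0], rule exI[of _ 0], rule exI[of _ 1]) simp

lemma bqf_equiv_sym: assumes "bqf_equiv f g" shows "bqf_equiv g f"
proof -
  obtain p q r s where det: "p * s - q * r = 1" and
    ev: "\<And>x y. bqf_eval g x y = bqf_eval f (p * x + q * y) (r * x + s * y)"
    using assms unfolding bqf_equiv_def by blast
  have "bqf_eval f x y = bqf_eval g (s * x + (- q) * y) ((- r) * x + p * y)" for x y
  proof -
    have "p * (s * x + (- q) * y) + q * ((- r) * x + p * y) = (p * s - q * r) * x"
      "r * (s * x + (- q) * y) + s * ((- r) * x + p * y) = (p * s - q * r) * y"
      by (simp_all add: algebra_simps)
    then show ?thesis using ev det by simp
  qed
  moreover have "s * p - (- q) * (- r) = 1" using det by (simp add: algebra_simps)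
  ultimately show ?thesis unfolding bqf_equiv_def by blast
qed

lemma bqf_equiv_trans: assumes "bqf_equiv f g" "bqf_equiv g h" shows "bqf_equiv f h"
proof -
  obtain p q r s where det: "p * s - q * r = 1" and
    ev: "\<And>x y. bqf_eval g x y = bqf_eval f (p * x + q * y) (r * x + s * y)"
    using assms(1) unfolding bqf_equiv_def by blast
  obtain p' q' r' s' where det': "p' * s' - q' * r' = 1" and
    ev': "\<And>x y. bqf_eval h x y = bqf_eval g (p' * x + q' * y) (r' * x + s' * y)"
    using assms(2) unfolding bqf_equiv_def by blast
  have "bqf_eval h x y = bqf_eval f ((p * p' + q * r') * x + (p * q' + q * s') * y) ((r * p' + s * r') * x + (r * q' + s * s') * y)" for x y
  proof -
    have "p * (p' * x + q' * y) + q * (r' * x + s' * y) = (p * p' + q * r') * x + (p * q' + q * s') * y"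
      "r * (p' * x + q' * y) + s * (r' * x + s' * y) = (r * p' + s * r') * x + (r * q' + s * s') * y"
      by (simp_all add: algebra_simps)
    then show ?thesis using ev ev' by simp
  qed
  moreover have "(p * p' + q * r') * (r * q' + s * s') - (p * q' + q * s') * (r * p' + s * r') = (p * s - q * r) * (p' * s' - q' * r')"
    by (simp add: algebra_simps)
  then have "(p * p' + q * r') * (r * q' + s * s') - (p * q' + q * s') * (r * p' + s * r') = 1"
    using det det' by simp
  ultimately show ?thesis unfolding bqf_equiv_def by blast
qed

lemma equiv_rel: "equiv (ppd_forms Delta) (bqf_equiv_rel Delta)"
  unfolding equiv_def refl_on_def sym_def trans_def bqf_equiv_rel_def
  by (auto intro: bqf_equiv_refl bqf_equiv_sym bqf_equiv_trans)

abbreviation cls :: "int \<Rightarrow> bqf \<Rightarrow> bqf set" where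
  "cls Delta f \<equiv> bqf_equiv_rel Delta `` {f}"

lemma mult_classes:
  assumes D: "D > 0" and f1: "f1 \<in> ppd_forms (-4*D)" and f2: "f2 \<in> ppd_forms (-4*D)"
    and h: "h \<in> ppd_forms (-4*D)" and c: "dirichlet_composite (-4*D) f1 f2 h"
  shows "monoid.mult (form_class_group (-4*D)) (cls (-4*D) f1) (cls (-4*D) f2) = cls (-4*D) h"
proof -
  have EQ: "equiv (ppd_forms (-4*D)) (bqf_equiv_rel (-4*D))" by (rule equiv_rel)
  have self: "x \<in> ppd_forms (-4*D) \<Longrightarrow> x \<in> cls (-4*D) x" for x using equiv_class_self[OF EQ] .
  show ?thesis unfolding form_class_group_def monoid.simps
  proof (rule the_equality)
    show "cls (-4*D) h \<in> form_classes (-4*D) \<and>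
      (\<exists>f1'\<in>cls (-4*D) f1. \<exists>f2'\<in>cls (-4*D) f2. \<exists>h'\<in>cls (-4*D) h. dirichlet_composite (-4*D) f1' f2' h')"
    proof
      show "cls (-4*D) h \<in> form_classes (-4*D)" using h by (simp add: form_classes_def quotientI)
      have "f1 \<in> cls (-4*D) f1" "f2 \<in> cls (-4*D) f2" "h \<in> cls (-4*D) h" using self f1 f2 h by auto
      then show "\<exists>f1'\<in>cls (-4*D) f1. \<exists>f2'\<in>cls (-4*D) f2. \<exists>h'\<in>cls (-4*D) h. dirichlet_composite (-4*D) f1' f2' h'"
        using c by blast
    qed
  next
    fix Z assume "Z \<in> form_classes (-4*D) \<and>
      (\<exists>f1'\<in>cls (-4*D) f1. \<exists>f2'\<in>cls (-4*D) f2. \<exists>h'\<in>Z. dirichlet_composite (-4*D) f1' f2' h')"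
    then obtain f1' f2' h' where Z: "Z \<in> form_classes (-4*D)" and i1: "f1' \<in> cls (-4*D) f1"
      and i2: "f2' \<in> cls (-4*D) f2" and i3: "h' \<in> Z" and c': "dirichlet_composite (-4*D) f1' f2' h'"
      by blast
    obtain z where z: "Z = cls (-4*D) z" "z \<in> ppd_forms (-4*D)" using Z unfolding form_classes_def
      by (auto elim: quotientE)
    have r1: "(f1, f1') \<in> bqf_equiv_rel (-4*D)" using i1 by simp
    have r2: "(f2, f2') \<in> bqf_equiv_rel (-4*D)" using i2 by simp
    have r3: "(z, h') \<in> bqf_equiv_rel (-4*D)" using i3 z by simp
    have "bqf_equiv h h'"
      using r1 r2 r3 by (intro composite_welldef[OF D f1 _ f2 _ h _ _ _ c c']) (auto simp: bqf_equiv_rel_def)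
    then have "(h, h') \<in> bqf_equiv_rel (-4*D)" using h r3 by (auto simp: bqf_equiv_rel_def)
    then have "cls (-4*D) h = cls (-4*D) h'" using equiv_class_eq[OF EQ] by blast
    also have "\<dots> = Z" using equiv_class_eq[OF EQ r3] z by simp
    finally show "Z = cls (-4*D) h" by simp
  qed
qed



lemma legendre_one:
  assumes "Legendre a p = 1"
  shows "\<not> p dvd a" "\<exists>y. [y^2 = a] (mod p)"
  using assms unfolding Legendre_def QuadRes_def
  by (auto split: if_splits simp: cong_0_iff)

lemma sqrt_lift:
  fixes a x M :: int and p :: nat
  assumes p: "prime p" "odd p" and pa: "\<not> int p dvd a" and pM: "int p dvd M"
    and x: "[x^2 = a] (mod M)"
  shows "\<exists>y. [y^2 = a] (mod (int p * M))"
proof -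
  have "M dvd x^2 - a" using x by (simp add: cong_iff_dvd_diff)
  then obtain s where s: "x^2 - a = M * s" unfolding dvd_def by blast
  have "\<not> int p dvd x"
  proof
    assume "int p dvd x"
    then have "int p dvd x^2" by (simp add: power2_eq_square)
    moreover have "int p dvd x^2 - a" using s pM by simp
    ultimately have "int p dvd x^2 - (x^2 - a)" by (rule dvd_diff)
    then show False using pa by simp
  qed
  moreover have pr: "prime (int p)" using p by simp
  ultimately have c1: "coprime (int p) x" by (simp add: prime_imp_coprime)
  have "\<not> int p dvd 2"
  proof
    assume "int p dvd 2"
    then have "int p dvd int 2" by simp
    then have "p dvd 2" by (simp only: of_nat_dvd_iff)
    then have "p \<le> 2" by (rule dvd_imp_le) simp
    moreover have "p > 1" using prime_gt_1_nat[OF p(1)] .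
    ultimately have "p = 2" by simp
    then show False using p by simp
  qed
  then have c2: "coprime (int p) 2" using prime_imp_coprime[OF pr] by blast
  have "coprime (int p) (2 * x)" using c1 c2 by simp
  then have "coprime (2 * x) (int p)" by (simp add: coprime_commute)
  then obtain w where w: "[2 * x * w = 1] (mod int p)" using cong_solve_coprime_int by blast
  then have dw: "int p dvd 2 * x * w - 1" by (simp add: cong_iff_dvd_diff)
  define t where "t = - s * w"
  have "s + 2 * x * t = - s * (2 * x * w - 1)" unfolding t_def by (simp add: algebra_simps)
  then have d1: "int p dvd s + 2 * x * t" using dw by simp
  have d2: "int p dvd t^2 * M" using pM by simp
  have "int p dvd s + 2 * x * t + t^2 * M" using d1 d2 by simp
  then obtain k where k: "s + 2 * x * t + t^2 * M = int p * k" unfolding dvd_def by blast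
  have "(x + t * M)^2 - a = M * (s + 2 * x * t + t^2 * M)"
    using s by (simp add: power2_eq_square algebra_simps)
  also have "\<dots> = (int p * M) * k" using k by simp
  finally have "int p * M dvd (x + t * M)^2 - a" by simp
  then show ?thesis by (intro exI[of _ "x + t * M"]) (simp add: cong_iff_dvd_diff)
qed

lemma sqrt_mod:
  fixes a :: int
  shows "m > 0 \<Longrightarrow> (\<forall>p \<in> prime_factors m. odd p \<and> Legendre a (int p) = 1) \<Longrightarrow> \<exists>x. [x^2 = a] (mod int m)"
proof (induction m rule: less_induct)
  case (less m)
  show ?case
  proof (cases "m = 1")
    case True then show ?thesis by auto
  next
    case False
    then obtain p where p: "prime p" "p dvd m" using prime_factor_nat by blast
    then obtain m' where m': "m = p * m'" by blast
    have pf: "p \<in> prime_factors m" using p less.prems by (simp add: in_prime_factors_iff)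
    then have pp: "odd p" "Legendre a (int p) = 1" using less.prems by auto
    have m'pos: "m' > 0" using m' less.prems by (cases m') auto
    have "p > 1" using prime_gt_1_nat[OF p(1)] .
    then have "m' < m" using m' m'pos by simp
    moreover have "\<forall>q \<in> prime_factors m'. odd q \<and> Legendre a (int q) = 1"
      using less.prems m' m'pos by (auto simp: in_prime_factors_iff)
    ultimately obtain x where x: "[x^2 = a] (mod int m')" using less.IH m'pos by blast
    have pa: "\<not> int p dvd a" using legendre_one(1)[OF pp(2)] .
    show ?thesis
    proof (cases "p dvd m'")
      case True
      then have "int p dvd int m'" by simp
      from sqrt_lift[OF p(1) pp(1) pa this x] show ?thesis using m' by simp
    next
      case False
      then have cop: "coprime (int p) (int m')" using p by (simp add: prime_imp_coprime)
      obtain y where y: "[y^2 = a] (mod int p)" using legendre_one(2)[OF pp(2)] by blast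
      obtain z where z: "[z = y] (mod int p)" "[z = x] (mod int m')"
        using binary_chinese_remainder_int[OF cop] by blast
      have "[z^2 = y^2] (mod int p)" using z(1) by (simp add: cong_pow)
      then have "[z^2 = a] (mod int p)" using y by (rule cong_trans)
      moreover have "[z^2 = x^2] (mod int m')" using z(2) by (simp add: cong_pow)
      then have "[z^2 = a] (mod int m')" using x by (rule cong_trans)
      ultimately have "int p * int m' dvd z^2 - a"
        using cop by (intro divides_mult) (auto simp: cong_iff_dvd_diff)
      then show ?thesis using m' by (intro exI[of _ z]) (simp add: cong_iff_dvd_diff)
    qed
  qed
qed



lemma forward_dir:
  fixes D :: int and a b c p :: nat
  assumes D: "D > 0" and sf: "squarefree D"
    and eq: "int a ^ 2 + D * int b ^ 2 = int c ^ 2" and g: "gcd (gcd a b) c = 1"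
    and p: "p \<in> prime_factors c"
  shows "Legendre (- D) (int p) = 1"
proof -
  have pp: "prime p" "p dvd c" using p by (auto simp: in_prime_factors_iff)
  define P where "P = int p"
  have Pp: "prime P" using pp P_def by simp
  have Pc: "P dvd int c" using pp P_def by simp
  have a2: "int a ^ 2 = int c ^ 2 - D * int b ^ 2" using eq by simp
  have Pc2: "P dvd int c ^ 2" using Pc by (simp add: power2_eq_square dvd_mult2)
  have nb: "\<not> P dvd int b"
  proof
    assume Pb: "P dvd int b"
    have "P dvd D * int b ^ 2" using Pb by (simp add: power2_eq_square dvd_mult2 dvd_mult)
    then have "P dvd int c ^ 2 - D * int b ^ 2" using Pc2 by (rule dvd_diff[rotated])
    then have "P dvd int a ^ 2" using a2 by simp
    then have "P dvd int a" using prime_dvd_power_iff[OF Pp, of 2] by simp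
    then have "p dvd a" "p dvd b" using Pb unfolding P_def by (simp_all only: of_nat_dvd_iff)
    then have "p dvd gcd (gcd a b) c" using pp by (simp add: gcd_greatest)
    then show False using g pp by simp
  qed
  have nD: "\<not> P dvd D"
  proof
    assume PD: "P dvd D"
    have "P dvd D * int b ^ 2" using PD by (simp add: dvd_mult2)
    then have "P dvd int c ^ 2 - D * int b ^ 2" using Pc2 by (rule dvd_diff[rotated])
    then have "P dvd int a ^ 2" using a2 by simp
    then have "P dvd int a" using prime_dvd_power_iff[OF Pp, of 2] by simp
    then have "P^2 dvd int a ^ 2" "P^2 dvd int c ^ 2" using Pc by (simp_all add: dvd_power_same)
    then have "P^2 dvd int c ^ 2 - int a ^ 2" by (rule dvd_diff[rotated])
    moreover have "int c ^ 2 - int a ^ 2 = D * int b ^ 2" using eq by simp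
    ultimately have "P^2 dvd D * int b ^ 2" by simp
    moreover have "coprime (P^2) (int b ^ 2)" using nb Pp by (simp add: prime_imp_coprime)
    ultimately have "P^2 dvd D" by (simp add: coprime_dvd_mult_left_iff)
    then have "P dvd 1" using sf unfolding squarefree_def by blast
    then show False using Pp not_prime_unit by blast
  qed
  then have n0: "\<not> [- D = 0] (mod P)" by (simp add: cong_0_iff)
  have "coprime (int b) P" using nb Pp by (simp add: prime_imp_coprime coprime_commute)
  then obtain w where w: "[int b * w = 1] (mod P)" using cong_solve_coprime_int by blast
  then have dw: "P dvd int b * w - 1" by (simp add: cong_iff_dvd_diff)
  have aw: "(int a * w)^2 = (int c ^ 2 - D * int b ^ 2) * w^2" by (simp add: power_mult_distrib a2)
  have "(int a * w)^2 - (- D) = int c ^ 2 * w^2 - D * ((int b * w) - 1) * ((int b * w) + 1)"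
    unfolding aw by (simp add: power2_eq_square algebra_simps)
  moreover have "P dvd int c ^ 2 * w^2 - D * ((int b * w) - 1) * ((int b * w) + 1)"
    using Pc dw by (intro dvd_diff) (simp_all add: power2_eq_square)
  ultimately have "[(int a * w)^2 = - D] (mod P)" by (simp add: cong_iff_dvd_diff)
  then have "QuadRes P (- D)" unfolding QuadRes_def by blast
  then show ?thesis using n0 unfolding Legendre_def P_def by simp
qed



lemma posdef_of:
  assumes D: "D > 0" and a: "a > 0" and b: "b = 2 * b0" and c: "b0^2 + D = a * c"
  shows "bqf_posdef (a, b, c)"
  unfolding bqf_posdef_def
proof (intro allI impI)
  fix x y :: int assume xy: "(x, y) \<noteq> (0, 0)"
  have "(a * x + b0 * y, y) \<noteq> (0,0)" using xy a by auto
  then have "znorm D (a * x + b0 * y, y) > 0" using znorm_pos[OF D] by blast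
  then have "a * bqf_eval (a, b, c) x y > 0" using norm_lat[OF b c] by simp
  then show "bqf_eval (a, b, c) x y > 0" using a by (simp add: zero_less_mult_iff)
qed

lemma elem2_sq:
  assumes "y \<in> carrier (elem_abelian_2 n)"
  shows "y \<otimes>\<^bsub>elem_abelian_2 n\<^esub> y = \<one>\<^bsub>elem_abelian_2 n\<^esub>"
proof -
  have "(\<lambda>i\<in>{..<n}. (y i + y i) mod int 2) = (\<lambda>i\<in>{..<n}. (0::int))"
    by (rule restrict_ext) presburger
  then show ?thesis unfolding elem_abelian_2_def by simp
qed

lemma principal_ppd:
  assumes D: "D > 0"
  shows "principal_form (-4*D) = (1, 0, D)" "(1, 0, D) \<in> ppd_forms (-4*D)"
    "dirichlet_composite (-4*D) (1,0,D) (1,0,D) (1,0,D)"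
proof -
  show "principal_form (-4*D) = (1, 0, D)" by (simp add: principal_form_def)
  have "bqf_posdef (1, 0, D)" using posdef_of[OF D, of 1 0 0 D] by simp
  then show "(1, 0, D) \<in> ppd_forms (-4*D)"
    by (simp add: ppd_forms_def bqf_disc_def bqf_primitive_def)
  show "dirichlet_composite (-4*D) (1,0,D) (1,0,D) (1,0,D)"
    unfolding dirichlet_composite_def by (auto intro!: exI[of _ 0] simp: cong_def)
qed



lemma backward_dir:
  fixes D :: int and c :: nat
  assumes D: "D > 0"
    and iso: "\<exists>n. form_class_group (-4 * D) \<cong> elem_abelian_2 n"
    and odd: "odd c" and cpos: "c > 0"
    and leg: "\<forall>p \<in> prime_factors c. Legendre (- D) (int p) = 1"
  shows "\<exists>a b :: nat. int a ^ 2 + D * int b ^ 2 = int c ^ 2 \<and> gcd (gcd a b) c = 1"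
proof -
  define Cc where "Cc = int c"
  have pfc: "prime_factors (c^2) = prime_factors c" using cpos by (simp add: prime_factors_power)
  have "\<forall>p \<in> prime_factors (c^2). odd p \<and> Legendre (- D) (int p) = 1"
  proof
    fix p assume "p \<in> prime_factors (c^2)"
    then have p: "p \<in> prime_factors c" using pfc by simp
    then have "p dvd c" by (simp add: in_prime_factors_iff)
    then have "odd p" using odd by (metis dvd_trans)
    then show "odd p \<and> Legendre (- D) (int p) = 1" using leg p by simp
  qed
  then obtain x where x: "[x^2 = - D] (mod int (c^2))" using sqrt_mod[of "c^2" "-D"] cpos by auto
  then have "Cc^2 dvd x^2 + D" by (simp add: cong_iff_dvd_diff Cc_def)
  then obtain k where k: "x^2 + D = Cc^2 * k" unfolding dvd_def by blast
  have Ccpos: "Cc > 0" using cpos Cc_def by simp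
  have cop: "coprime (2 * x) Cc"
  proof (rule ccontr)
    assume nc: "\<not> coprime (2 * x) Cc"
    define g where "g = gcd (2 * x) Cc"
    have "g \<noteq> 1" using nc g_def by (simp add: coprime_iff_gcd_eq_1)
    moreover have gpos: "g > 0" using Ccpos g_def by simp
    ultimately have "nat g \<noteq> 1" by simp
    then obtain q where q: "prime q" "q dvd nat g" using prime_factor_nat by blast
    have "int q dvd int (nat g)" using q(2) by (simp only: of_nat_dvd_iff)
    moreover have "int (nat g) = g" using gpos by simp
    ultimately have qg: "int q dvd g" by simp
    have q1: "int q dvd 2 * x" using dvd_trans[OF qg] g_def by simp
    have q2: "int q dvd Cc" using dvd_trans[OF qg] g_def by simp
    have "int q dvd int c" using q2 Cc_def by simp
    then have qc0: "q dvd c" by (simp only: of_nat_dvd_iff)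
    then have qc: "q \<in> prime_factors c" using q cpos by (simp add: in_prime_factors_iff)
    then have lq: "Legendre (- D) (int q) = 1" using leg by simp
    have oq: "odd q"
    proof
      assume "even q"
      then have "2 dvd c" using qc0 by (rule dvd_trans)
      then show False using odd by simp
    qed
    have qp: "prime (int q)" using q by simp
    have "\<not> int q dvd 2"
    proof
      assume "int q dvd 2"
      then have "int q dvd int 2" by simp
      then have "q dvd 2" by (simp only: of_nat_dvd_iff)
      then have "q \<le> 2" by (rule dvd_imp_le) simp
      moreover have "q > 1" using prime_gt_1_nat[OF q(1)] .
      ultimately have "q = 2" by simp
      then show False using oq by simp
    qed
    then have "int q dvd x" using q1 prime_dvd_mult_iff[OF qp] by simp
    then have "int q dvd x^2" by (simp add: power2_eq_square dvd_mult2)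
    moreover have "int q dvd Cc^2 * k" using q2 by (simp add: power2_eq_square dvd_mult2)
    ultimately have "int q dvd Cc^2 * k - x^2" by (rule dvd_diff[rotated])
    moreover have "Cc^2 * k - x^2 = D" using k by simp
    ultimately have "int q dvd D" by simp
    then show False using legendre_one(1)[OF lq] by simp
  qed
  have cop1: "gcd Cc (2 * x) = 1" using cop by (simp add: coprime_iff_gcd_eq_1 gcd.commute)
  have cop2: "gcd (Cc * Cc) (2 * x) = 1" using cop by (simp add: coprime_iff_gcd_eq_1[symmetric] coprime_commute)
  define f where "f = (Cc, 2 * x, Cc * k)"
  define h where "h = (Cc * Cc, 2 * x, k)"
  have kk: "x^2 + D = Cc * (Cc * k)" "x^2 + D = (Cc * Cc) * k" using k by (simp_all add: power2_eq_square)
  have f_ppd: "f \<in> ppd_forms (-4*D)"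
    unfolding f_def ppd_forms_def bqf_disc_def bqf_primitive_def
    using posdef_of[OF D Ccpos _ kk(1), of "2 * x"] kk(1) cop1
    by (simp add: power2_eq_square algebra_simps)
  have "Cc * Cc > 0" using Ccpos by simp
  then have h_ppd: "h \<in> ppd_forms (-4*D)"
    unfolding h_def ppd_forms_def bqf_disc_def bqf_primitive_def
    using posdef_of[OF D _ _ kk(2), of "2 * x"] kk(2) cop2
    by (simp add: power2_eq_square algebra_simps)
  have comp: "dirichlet_composite (-4*D) f f h"
  proof -
    have "(2 * x)^2 - (-4 * D) = (4 * Cc * Cc) * k" using kk(2) by (simp add: power2_eq_square algebra_simps)
    then have e: "((2 * x)^2 - (-4 * D)) div (4 * Cc * Cc) = k" using Ccpos by simp
    have c3: "[(2 * x)^2 = -4 * D] (mod 4 * Cc * Cc)"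
      using \<open>(2 * x)^2 - (-4 * D) = (4 * Cc * Cc) * k\<close> by (simp add: cong_iff_dvd_diff)
    have "gcd (gcd Cc Cc) ((2 * x + 2 * x) div 2) = 1" using cop1 by simp
    then show ?thesis unfolding dirichlet_composite_def f_def h_def
      using c3 e by (auto intro!: exI[of _ "2 * x"])
  qed
  note P = principal_ppd[OF D]
  define P0 where "P0 = ((1::int), (0::int), D)"
  define G where "G = form_class_group (-4*D)"
  have EQ: "equiv (ppd_forms (-4*D)) (bqf_equiv_rel (-4*D))" by (rule equiv_rel)
  have m1: "cls (-4*D) f \<otimes>\<^bsub>G\<^esub> cls (-4*D) f = cls (-4*D) h"
    unfolding G_def by (rule mult_classes[OF D f_ppd f_ppd h_ppd comp])
  have m2: "cls (-4*D) P0 \<otimes>\<^bsub>G\<^esub> cls (-4*D) P0 = cls (-4*D) P0"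
    unfolding G_def P0_def by (rule mult_classes[OF D P(2) P(2) P(2) P(3)])
  have carr: "carrier G = ppd_forms (-4*D) // bqf_equiv_rel (-4*D)"
    by (simp add: G_def form_class_group_def form_classes_def)
  have cf: "cls (-4*D) f \<in> carrier G" "cls (-4*D) h \<in> carrier G" "cls (-4*D) P0 \<in> carrier G"
    unfolding carr P0_def by (rule quotientI[OF f_ppd], rule quotientI[OF h_ppd], rule quotientI[OF P(2)])
  obtain n where "G \<cong> elem_abelian_2 n" using iso G_def by blast
  then obtain phi where phi: "phi \<in> iso G (elem_abelian_2 n)" unfolding is_iso_def by blast
  then have hom: "phi \<in> hom G (elem_abelian_2 n)" and bij: "bij_betw phi (carrier G) (carrier (elem_abelian_2 n))"
    by (auto simp: iso_def)
  have hm: "\<And>X Y. X \<in> carrier G \<Longrightarrow> Y \<in> carrier G \<Longrightarrow> phi (X \<otimes>\<^bsub>G\<^esub> Y) = phi X \<otimes>\<^bsub>elem_abelian_2 n\<^esub> phi Y"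
    using hom by (simp add: hom_def)
  have inC: "\<And>X. X \<in> carrier G \<Longrightarrow> phi X \<in> carrier (elem_abelian_2 n)"
    using bij by (auto simp: bij_betw_def)
  have "phi (cls (-4*D) h) = phi (cls (-4*D) f \<otimes>\<^bsub>G\<^esub> cls (-4*D) f)" by (simp only: m1)
  also have "\<dots> = phi (cls (-4*D) f) \<otimes>\<^bsub>elem_abelian_2 n\<^esub> phi (cls (-4*D) f)" by (rule hm[OF cf(1) cf(1)])
  also have "\<dots> = \<one>\<^bsub>elem_abelian_2 n\<^esub>" by (rule elem2_sq[OF inC[OF cf(1)]])
  finally have ph1: "phi (cls (-4*D) h) = \<one>\<^bsub>elem_abelian_2 n\<^esub>" .
  have "phi (cls (-4*D) P0) = phi (cls (-4*D) P0 \<otimes>\<^bsub>G\<^esub> cls (-4*D) P0)" by (simp only: m2)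
  also have "\<dots> = phi (cls (-4*D) P0) \<otimes>\<^bsub>elem_abelian_2 n\<^esub> phi (cls (-4*D) P0)" by (rule hm[OF cf(3) cf(3)])
  also have "\<dots> = \<one>\<^bsub>elem_abelian_2 n\<^esub>" by (rule elem2_sq[OF inC[OF cf(3)]])
  finally have ph2: "phi (cls (-4*D) P0) = \<one>\<^bsub>elem_abelian_2 n\<^esub>" .
  from ph1 ph2 have "phi (cls (-4*D) h) = phi (cls (-4*D) P0)" by simp
  moreover have inj: "inj_on phi (carrier G)" using bij by (simp add: bij_betw_def)
  ultimately have "cls (-4*D) h = cls (-4*D) P0"
    using inj_onD[OF inj _ cf(2) cf(3)] by blast
  then have "(P0, h) \<in> bqf_equiv_rel (-4*D)"
    using eq_equiv_class[OF sym EQ h_ppd] by blast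
  then have "bqf_equiv P0 h" unfolding bqf_equiv_rel_def by blast
  then obtain p q r s where det: "p * s - q * r = 1"
    and ev: "\<And>x y. bqf_eval h x y = bqf_eval P0 (p * x + q * y) (r * x + s * y)"
    unfolding bqf_equiv_def by blast
  have rep: "Cc * Cc = p^2 + D * r^2" using ev[of 1 0] by (simp add: bqf_eval_def h_def P0_def)
  have "gcd p r dvd p * s - q * r"
    using dvd_mult2[OF gcd_dvd1[of p r], of s] dvd_mult[OF gcd_dvd2[of p r], of q] by (rule dvd_diff)
  then have "gcd p r dvd 1" using det by simp
  then have gpr: "gcd p r = 1" by simp
  define a where "a = nat \<bar>p\<bar>"
  define b where "b = nat \<bar>r\<bar>"
  have ia: "int a ^ 2 = p^2" "int b ^ 2 = r^2" by (simp_all add: a_def b_def)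
  have "int (gcd a b) = gcd p r" by (simp only: a_def b_def gcd_int_def)
  then have "gcd a b = 1" using gpr by simp
  then have g1: "gcd (gcd a b) c = 1" by simp
  have "int c ^ 2 = Cc * Cc" unfolding Cc_def by (simp add: power2_eq_square)
  then have "int a ^ 2 + D * int b ^ 2 = int c ^ 2"
    unfolding ia using rep by simp
  with g1 have fin: "int a ^ 2 + D * int b ^ 2 = int c ^ 2 \<and> gcd (gcd a b) c = 1" by simp
  show ?thesis by (rule exI[of _ a], rule exI[of _ b], rule fin)
qed

theorem lemma3p3:
  fixes D :: int and c :: nat
  assumes "D > 0" and "squarefree D"
    and "(- D) mod 4 = 2 \<or> (- D) mod 4 = 3"
    and "\<exists>n. form_class_group (-4 * D) \<cong> elem_abelian_2 n"
    and "odd c" and "c > 0"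
  shows "(\<exists>a b :: nat. int a ^ 2 + D * int b ^ 2 = int c ^ 2 \<and> gcd (gcd a b) c = 1)
     \<longleftrightarrow> (\<forall>p \<in> prime_factors c. Legendre (- D) (int p) = 1)"
proof
  assume "\<exists>a b :: nat. int a ^ 2 + D * int b ^ 2 = int c ^ 2 \<and> gcd (gcd a b) c = 1"
  then obtain a b where ab: "int a ^ 2 + D * int b ^ 2 = int c ^ 2 \<and> gcd (gcd a b) c = 1"
    apply (elim exE)
    apply (rule that)
    apply assumption
    done
  show "\<forall>p \<in> prime_factors c. Legendre (- D) (int p) = 1"
  proof
    fix p assume p: "p \<in> prime_factors c"
    show "Legendre (- D) (int p) = 1"
      using ab p by (intro forward_dir[OF assms(1,2), of a b c p]) auto
  qed
next
  assume "\<forall>p \<in> prime_factors c. Legendre (- D) (int p) = 1"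
  then show "\<exists>a b :: nat. int a ^ 2 + D * int b ^ 2 = int c ^ 2 \<and> gcd (gcd a b) c = 1"
    using backward_dir[OF assms(1,4,5,6)] by blast
qed

end
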